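(* Let $c\in\mathbb{C}(t)\setminus\{0,1,t\}$ and $F_n$, $P_1$ as in the context. Write $F_n(t,1)=(E_n+D_nt+O(t^2),\;C_n+O(t))$ as polynomials in $t$. Then $E_n=P_1(0,1)^{4^{n-1}}$ for all $n\ge1$, and $$\limsup_{n\to\infty}|C_n|^{1/4^{n-1}}\le|P_1(0,1)|,\qquad\limsup_{n\to\infty}|D_n|^{1/4^{n-1}}\le|P_1(0,1)|.$$
   Context: $F_{t_1,t_2}(z,w)=\big((t_1w^2-t_2z^2)^2,\;4t_2zw(w-z)(t_1w-t_2z)\big)$. $C=(c_1,c_2)$ is a pair of coprime homogeneous polynomials in $(t_1,t_2)$ of equal degree with $c(t)=c_1(t,1)/c_2(t,1)$. $F_1=F_{t_1,t_2}(C)/\gcd(F_{t_1,t_2}(C))=(P_1,Q_1)$ (dividing by the gcd of the two coordinates), and $F_{n+1}=F_{t_1,t_2}(F_n)/t_2^2$ (substituting the coordinates of $F_n$ for $(z,w)$). *)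

theory Defs
  imports Complex_Main "HOL-Computational_Algebra.Polynomial_Factorial" "HOL-Computational_Algebra.Field_as_Ring"
    "HOL-Library.Liminf_Limsup" "HOL-Library.Extended_Real"
begin

text \<open>Everything is written in dehomogenized form: a binary form \<open>P(t1,t2)\<close>
  is represented by the univariate polynomial \<open>P(t,1)\<close>.  Setting \<open>t2 = 1\<close>,
  the map \<open>F_{t1,t2}\<close> becomes \<open>F_{t,1}\<close> below and the division by \<open>t2^2\<close>
  becomes trivial.\<close>

definition tvar :: "complex poly" where
  "tvar = [:0, 1:]"

definition Fmap :: "complex poly \<times> complex poly \<Rightarrow> complex poly \<times> complex poly" where
  "Fmap zw = (case zw of (z, w) \<Rightarrow>
      ((tvar * w^2 - z^2)^2, 4 * z * w * (w - z) * (tvar * w - z)))"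

definition F1 :: "complex poly \<Rightarrow> complex poly \<Rightarrow> complex poly \<times> complex poly" where
  "F1 c1 c2 = (case Fmap (c1, c2) of (a, b) \<Rightarrow> (a div gcd a b, b div gcd a b))"

definition Fn :: "complex poly \<Rightarrow> complex poly \<Rightarrow> nat \<Rightarrow> complex poly \<times> complex poly" where
  "Fn c1 c2 n = (Fmap ^^ (n - 1)) (F1 c1 c2)"

end

theory Submission
  imports Defs
begin

lemma step_bound:
  fixes x a A cn dn en :: real
  assumes A: "A \<ge> 1" and x: "x \<ge> 0" and c: "cn \<le> A * x" and d: "dn \<le> A * x"
    and c0: "cn \<ge> 0" and d0: "dn \<ge> 0"
  shows "4 * x^2 * cn * (cn + x) \<le> 8 * A^2 * x^4"
    and "2 * x^2 * (cn^2 + 2 * x * dn) \<le> 8 * A^2 * x^4"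
proof -
  have "cn * (cn + x) \<le> (A*x) * (A*x + x)"
    using c c0 x by (intro mult_mono) auto
  also have "\<dots> \<le> 2 * A^2 * x^2"
  proof -
    have "A * x^2 \<le> A^2 * x^2" using A x
      by (intro mult_right_mono) (auto simp: power2_eq_square)
    then show ?thesis by (simp add: power2_eq_square algebra_simps)
  qed
  finally have "4 * x^2 * (cn * (cn + x)) \<le> 4 * x^2 * (2 * A^2 * x^2)"
    using x by (intro mult_left_mono) auto
  then show "4 * x^2 * cn * (cn + x) \<le> 8 * A^2 * x^4"
    by (simp add: algebra_simps power2_eq_square power4_eq_xxxx)
  have h1: "cn^2 \<le> A^2*x^2" using c c0 power_mono[of cn "A*x" 2] by (simp add: power_mult_distrib)
  have "x * dn \<le> x * (A * x)" using d x by (intro mult_left_mono) auto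
  moreover have "x * (A*x) \<le> x * (A * (A * x))" using A x
    by (intro mult_left_mono) (auto simp: mult_right_mono mult_le_cancel_right1)
  ultimately have h2: "x * dn \<le> A^2*x^2" by (simp add: power2_eq_square algebra_simps)
  have h3: "0 \<le> A^2*x^2" by simp
  have "cn^2 + 2 * x * dn \<le> 4 * A^2 * x^2" using h1 h2 h3 by linarith
  then have "2 * x^2 * (cn^2 + 2 * x * dn) \<le> 2 * x^2 * (4 * A^2 * x^2)"
    using x by (intro mult_left_mono) auto
  then show "2 * x^2 * (cn^2 + 2 * x * dn) \<le> 8 * A^2 * x^4"
    by (simp add: algebra_simps power2_eq_square power4_eq_xxxx)
qed

lemma seq_bound:
  fixes e c d :: "nat \<Rightarrow> complex" and K :: real
  assumes rec_e: "\<And>n. n \<ge> 1 \<Longrightarrow> e (Suc n) = e n ^ 4"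
    and rec_c: "\<And>n. n \<ge> 1 \<Longrightarrow> c (Suc n) = - 4 * (e n)^2 * c n * (c n - e n)"
    and rec_d: "\<And>n. n \<ge> 1 \<Longrightarrow> d (Suc n) = -2 * (e n)^2 * ((c n)^2 - 2 * e n * d n)"
    and K: "K \<ge> 8" and n0: "n0 \<ge> 1"
    and bc: "cmod (c n0) \<le> K^(2^(n0-1)) / 8 * cmod (e n0)"
    and bd: "cmod (d n0) \<le> K^(2^(n0-1)) / 8 * cmod (e n0)"
    and n: "n \<ge> n0"
  shows "cmod (c n) \<le> K^(2^(n-1)) / 8 * cmod (e n) \<and> cmod (d n) \<le> K^(2^(n-1)) / 8 * cmod (e n)"
  using n
proof (induction n rule: dec_induct)
  case base then show ?case using bc bd by auto
next
  case (step n)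
  have n1: "n \<ge> 1" using step n0 by auto
  define A where "A = K^(2^(n-1)) / 8"
  have "K \<le> K^(2^(n-1))" using K by (intro self_le_power) auto
  then have A1: "A \<ge> 1" using K unfolding A_def by auto
  have KA: "K^(2^(Suc n - 1)) / 8 = 8 * A^2"
  proof (cases n)
    case (Suc m)
    have "K^(2^(Suc m)) = (K^(2^m))^2" by (simp add: power_mult[symmetric] mult.commute)
    then show ?thesis using Suc by (simp add: A_def power2_eq_square power_mult_distrib)
  qed (use n1 in auto)
  define x where "x = cmod (e n)"
  have x0: "x \<ge> 0" unfolding x_def by auto
  have ih: "cmod (c n) \<le> A * x" "cmod (d n) \<le> A * x" using step.IH unfolding A_def x_def by auto
  note sb = step_bound[OF A1 x0 ih norm_ge_zero norm_ge_zero]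
  have ex: "cmod (e (Suc n)) = x^4" using rec_e[OF n1] unfolding x_def by (simp add: norm_power)
  have "cmod (c (Suc n)) = 4 * x^2 * cmod (c n) * cmod (c n - e n)"
    using rec_c[OF n1] unfolding x_def by (simp add: norm_mult norm_power)
  also have "\<dots> \<le> 4 * x^2 * cmod (c n) * (cmod (c n) + x)"
    unfolding x_def by (intro mult_left_mono norm_triangle_ineq4) auto
  also have "\<dots> \<le> 8 * A^2 * x^4" by (rule sb(1))
  finally have 1: "cmod (c (Suc n)) \<le> K^(2^(Suc n - 1)) / 8 * cmod (e (Suc n))"
    using KA ex by simp
  have "cmod (d (Suc n)) = 2 * x^2 * cmod ((c n)^2 - 2 * e n * d n)"
    using rec_d[OF n1] unfolding x_def by (simp add: norm_mult norm_power)
  also have "\<dots> \<le> 2 * x^2 * (cmod (c n)^2 + 2 * x * cmod (d n))"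
  proof -
    have "cmod ((c n)^2 - 2 * e n * d n) \<le> cmod ((c n)^2) + cmod (2 * e n * d n)"
      by (rule norm_triangle_ineq4)
    also have "\<dots> = cmod (c n)^2 + 2 * x * cmod (d n)"
      unfolding x_def by (simp add: norm_mult norm_power)
    finally show ?thesis by (intro mult_left_mono) auto
  qed
  also have "\<dots> \<le> 8 * A^2 * x^4" by (rule sb(2))
  finally have 2: "cmod (d (Suc n)) \<le> K^(2^(Suc n - 1)) / 8 * cmod (e (Suc n))"
    using KA ex by simp
  show ?case using 1 2 by blast
qed

lemma powr_eq1: fixes K :: real assumes "K > 0"
  shows "(K^(2^k)) powr (1/4^k) = K powr (1/2^k)"
proof -
  have "(K^(2^k)) powr (1/4^k) = (K powr (2^k)) powr (1/4^k)"
    using assms powr_realpow[of K "2^k", symmetric] by simp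
  also have "\<dots> = K powr (2^k * (1/4^k))" by (simp add: powr_powr)
  also have "2^k * (1/4^k) = (1/2^k :: real)"
  proof -
    have "(4::real)^k = 2^k * 2^k" by (simp flip: power_mult_distrib)
    then show ?thesis by simp
  qed
  finally show ?thesis .
qed

lemma powr_eq2: fixes e :: real assumes "e \<ge> 0"
  shows "(e^(4^k)) powr (1/4^k) = e"
proof (cases "e = 0")
  case True then show ?thesis by simp
next
  case False
  then have "(e^(4^k)) powr (1/4^k) = (e powr (4^k)) powr (1/4^k)"
    using assms False powr_realpow[of e "4^k", symmetric] by simp
  also have "\<dots> = e" using False assms by (simp add: powr_powr)
  finally show ?thesis .
qed

lemma limsup_bound:
  fixes X :: "nat \<Rightarrow> real" and e K :: real
  assumes e: "e \<ge> 0" and K: "K \<ge> 8" and X0: "\<And>n. X n \<ge> 0"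
    and XB: "\<And>n. n \<ge> n0 \<Longrightarrow> X n \<le> K^(2^(n-1))/8 * e^(4^(n-1))"
  shows "limsup (\<lambda>n. ereal (X n powr (1 / 4 ^ (n - 1)))) \<le> ereal e"
proof -
  define g where "g n = K powr (1/2^(n-1)) * e" for n
  have ev: "eventually (\<lambda>n. ereal (X n powr (1 / 4 ^ (n - 1))) \<le> ereal (g n)) sequentially"
    unfolding eventually_sequentially
  proof (intro exI allI impI)
    fix n assume "n \<ge> n0"
    then have "X n \<le> K^(2^(n-1))/8 * e^(4^(n-1))" by (rule XB)
    also have "\<dots> \<le> K^(2^(n-1)) * e^(4^(n-1))" using K e by simp
    finally have "X n powr (1 / 4 ^ (n - 1)) \<le> (K^(2^(n-1)) * e^(4^(n-1))) powr (1 / 4 ^ (n - 1))"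
      using X0 by (intro powr_mono2) auto
    also have "\<dots> = (K^(2^(n-1))) powr (1 / 4 ^ (n - 1)) * (e^(4^(n-1))) powr (1 / 4 ^ (n - 1))"
      using K e by (simp add: powr_mult)
    also have "\<dots> = g n" unfolding g_def using K e by (simp add: powr_eq1 powr_eq2)
    finally show "ereal (X n powr (1 / 4 ^ (n - 1))) \<le> ereal (g n)" by simp
  qed
  have "(\<lambda>n. 1/2^(n-1) :: real) \<longlonglongrightarrow> 0"
  proof (rule LIMSEQ_offset[where k=1])
    show "(\<lambda>n. 1/2^(n + 1 - 1) :: real) \<longlonglongrightarrow> 0"
      by (simp add: LIMSEQ_divide_realpow_zero)
  qed
  then have "(\<lambda>n. K powr (1/2^(n-1))) \<longlonglongrightarrow> K powr 0"
    using K by (intro tendsto_powr tendsto_const) auto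
  then have "g \<longlonglongrightarrow> e" unfolding g_def using K
    by (metis (no_types) mult_1 powr_zero_eq_one tendsto_mult_right not_numeral_le_zero order_trans)
  then have "(\<lambda>n. ereal (g n)) \<longlonglongrightarrow> ereal e" by (simp add: tendsto_ereal)
  then have "limsup (\<lambda>n. ereal (g n)) = ereal e" by (intro lim_imp_Limsup) auto
  moreover have "limsup (\<lambda>n. ereal (X n powr (1 / 4 ^ (n - 1)))) \<le> limsup (\<lambda>n. ereal (g n))"
    by (intro Limsup_mono ev)
  ultimately show ?thesis by simp
qed

lemma coeff1_eq: "coeff p 1 = poly (pderiv p) 0"
  by (simp add: poly_0_coeff_0 coeff_pderiv)

lemma Fmap0: "coeff (fst (Fmap (z,w))) 0 = (coeff z 0)^4"
  "coeff (snd (Fmap (z,w))) 0 = - 4 * (coeff z 0)^2 * coeff w 0 * (coeff w 0 - coeff z 0)"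
  by (simp_all add: Fmap_def poly_0_coeff_0[symmetric] tvar_def; algebra)+

lemma tvar_facts: "pderiv tvar = 1" "poly tvar 0 = 0"
  by (simp_all add: tvar_def pderiv_pCons)

lemma Fmap1: "coeff (fst (Fmap (z,w))) 1 = -2 * (coeff z 0)^2 * ((coeff w 0)^2 - 2 * coeff z 0 * coeff z 1)"
proof -
  have "coeff (fst (Fmap (z,w))) 1 = poly (pderiv ((tvar * w^2 - z^2)^2)) 0"
    unfolding Fmap_def by (simp only: prod.case fst_conv coeff1_eq)
  also have "\<dots> = -2 * (poly z 0)^2 * ((poly w 0)^2 - 2 * poly z 0 * poly (pderiv z) 0)"
    by (simp add: tvar_facts pderiv_power pderiv_mult pderiv_diff; algebra)
  finally show ?thesis by (simp add: poly_0_coeff_0 coeff_pderiv)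
qed

lemma Fn_Suc: "n \<ge> 1 \<Longrightarrow> Fn c1 c2 (Suc n) = Fmap (Fn c1 c2 n)"
  unfolding Fn_def by (cases n) auto

theorem lemma4p6:
  fixes c1 c2 :: "complex poly"
  assumes "c2 \<noteq> 0" and "coprime c1 c2"
    and "c1 \<noteq> 0" and "c1 \<noteq> c2" and "c1 \<noteq> tvar * c2"
  defines "P1 \<equiv> fst (F1 c1 c2)"
    and "E \<equiv> (\<lambda>n. coeff (fst (Fn c1 c2 n)) 0)"
    and "D \<equiv> (\<lambda>n. coeff (fst (Fn c1 c2 n)) 1)"
    and "C \<equiv> (\<lambda>n. coeff (snd (Fn c1 c2 n)) 0)"
  shows "(\<forall>n\<ge>1. E n = poly P1 0 ^ (4 ^ (n - 1)))
    \<and> limsup (\<lambda>n. ereal (cmod (C n) powr (1 / 4 ^ (n - 1)))) \<le> ereal (cmod (poly P1 0))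
    \<and> limsup (\<lambda>n. ereal (cmod (D n) powr (1 / 4 ^ (n - 1)))) \<le> ereal (cmod (poly P1 0))"
proof -
  define e0 where "e0 = poly P1 0"
  have E1: "E 1 = e0" unfolding E_def e0_def P1_def Fn_def by (simp add: poly_0_coeff_0)
  have FS: "Fn c1 c2 (Suc n) = Fmap (fst (Fn c1 c2 n), snd (Fn c1 c2 n))" if "n \<ge> 1" for n
    using Fn_Suc[OF that] by simp
  have rec_e: "E (Suc n) = E n ^ 4" if "n \<ge> 1" for n
    unfolding E_def FS[OF that] Fmap0 ..
  have rec_c: "C (Suc n) = - 4 * (E n)^2 * C n * (C n - E n)" if "n \<ge> 1" for n
    unfolding E_def C_def FS[OF that] Fmap0 ..
  have rec_d: "D (Suc n) = -2 * (E n)^2 * ((C n)^2 - 2 * E n * D n)" if "n \<ge> 1" for n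
    unfolding E_def C_def D_def FS[OF that] Fmap1 ..
  have Epow: "E n = e0 ^ (4 ^ (n - 1))" if "n \<ge> 1" for n
    using that
  proof (induction n rule: dec_induct)
    case base then show ?case using E1 by simp
  next
    case (step n)
    have "4 ^ (Suc n - 1) = (4::nat) ^ (n - 1) * 4" using step(1)
      by (cases n) auto
    then show ?case using rec_e[OF step(1)] step.IH by (simp add: power_mult)
  qed
  define e where "e = cmod e0"
  have e0': "e \<ge> 0" unfolding e_def by simp
  have cE: "cmod (E n) = e ^ (4^(n-1))" if "n \<ge> 1" for n
    using Epow[OF that] unfolding e_def by (simp add: norm_power)
  obtain K n0 where K: "K \<ge> 8" and n0: "n0 \<ge> 1"
    and bc: "cmod (C n0) \<le> K^(2^(n0-1)) / 8 * cmod (E n0)"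
    and bd: "cmod (D n0) \<le> K^(2^(n0-1)) / 8 * cmod (E n0)"
  proof (cases "e = 0")
    case True
    then have "E 1 = 0" using E1 e_def by simp
    then have "C 2 = 0" "D 2 = 0" using rec_c[of 1] rec_d[of 1] by (simp_all add: numeral_2_eq_2)
    then show ?thesis by (intro that[of 8 2]) auto
  next
    case False
    then have ep: "e > 0" using e0' by simp
    define K where "K = 8 * max 1 (max (cmod (C 1) / e) (cmod (D 1) / e))"
    have "cmod (C 1) / e \<le> K / 8" "cmod (D 1) / e \<le> K / 8" unfolding K_def by auto
    then have "cmod (C 1) \<le> K / 8 * e" "cmod (D 1) \<le> K / 8 * e"
      using ep by (simp_all add: divide_le_eq)
    moreover have "K \<ge> 8" unfolding K_def by simp
    ultimately show ?thesis using cE[of 1] by (intro that[of K 1]) auto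
  qed
  have B: "cmod (C n) \<le> K^(2^(n-1)) / 8 * e^(4^(n-1)) \<and> cmod (D n) \<le> K^(2^(n-1)) / 8 * e^(4^(n-1))"
    if "n \<ge> n0" for n
    using seq_bound[of E C D K n0 n, OF rec_e rec_c rec_d K n0 bc bd that] cE[of n] n0 that by simp
  have "limsup (\<lambda>n. ereal (cmod (C n) powr (1 / 4 ^ (n - 1)))) \<le> ereal e"
    using B by (intro limsup_bound[OF e0' K, of _ n0]) auto
  moreover have "limsup (\<lambda>n. ereal (cmod (D n) powr (1 / 4 ^ (n - 1)))) \<le> ereal e"
    using B by (intro limsup_bound[OF e0' K, of _ n0]) auto
  ultimately show ?thesis using Epow unfolding e_def e0_def by auto
qed

end
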